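(* Let $C<D$, let $\psi_1,\psi_2:[C,D]\to\mathbb{R}$ be $C^1$ with $\psi_1<\psi_2$, and let $a=\{(y,\theta)\in\mathbb{R}\times[C,D]:\psi_1(\theta)\le y\le\psi_2(\theta)\}$. Set $M(\theta)=\max\{|\psi_1'(\theta)|,|\psi_2'(\theta)|\}$. Then for every $C^1$ function $v:\mathbb{R}^2\to\mathbb{R}$, $$\int_{\partial a}|v|\le2\Big\{(D-C)^{-1}+\big|((1+M^2)^{1/2}+2M)/(\psi_2-\psi_1)\big|_\infty\Big\}|1_av|_1+\sqrt2\big((1+|M|_\infty^2)^{1/2}+|M|_\infty\big)|1_a\nabla v|_1.$$
   Context: $\int_{\partial a}$ is with respect to one-dimensional (arclength) Lebesgue measure on $\partial a$; $|1_av|_1=\int_a|v|\,d\lambda_2$ and $|1_a\nabla v|_1=\int_a|\nabla v|\,d\lambda_2$ with $\lambda_2$ two-dimensional Lebesgue measure and $|\nabla v|$ the Euclidean norm of the gradient; $|\cdot|_\infty$ denotes supremum over $\theta\in[C,D]$. *)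

theory Defs
  imports "HOL-Analysis.Analysis"
begin

definition arclength_integral ::
  "(real \<times> real \<Rightarrow> real) \<Rightarrow> (real \<Rightarrow> real \<times> real) \<Rightarrow> real \<Rightarrow> real \<Rightarrow> real" where
  "arclength_integral f g s t =
     integral {s..t} (\<lambda>r. f (g r) * norm (vector_derivative g (at r within {s..t})))"

definition region :: "(real \<Rightarrow> real) \<Rightarrow> (real \<Rightarrow> real) \<Rightarrow> real \<Rightarrow> real \<Rightarrow> (real \<times> real) set" where
  "region \<psi>1 \<psi>2 C D = {(y, \<theta>). C \<le> \<theta> \<and> \<theta> \<le> D \<and> \<psi>1 \<theta> \<le> y \<and> y \<le> \<psi>2 \<theta>}"

definition boundary_integral ::
  "(real \<Rightarrow> real) \<Rightarrow> (real \<Rightarrow> real) \<Rightarrow> real \<Rightarrow> real \<Rightarrow> (real \<times> real \<Rightarrow> real) \<Rightarrow> real" where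
  "boundary_integral \<psi>1 \<psi>2 C D f =
      arclength_integral f (\<lambda>\<theta>. (\<psi>1 \<theta>, \<theta>)) C D
    + arclength_integral f (\<lambda>\<theta>. (\<psi>2 \<theta>, \<theta>)) C D
    + arclength_integral f (\<lambda>y. (y, C)) (\<psi>1 C) (\<psi>2 C)
    + arclength_integral f (\<lambda>y. (y, D)) (\<psi>1 D) (\<psi>2 D)"

definition grad_norm :: "((real \<times> real) \<Rightarrow>\<^sub>L real) \<Rightarrow> real" where
  "grad_norm L = sqrt ((blinfun_apply L (1, 0))\<^sup>2 + (blinfun_apply L (0, 1))\<^sup>2)"

end

theory Submission
  imports Defs
begin


lemma region_compact:
  fixes \<psi>1 \<psi>2 :: "real \<Rightarrow> real"
  assumes "continuous_on {C..D} \<psi>1" "continuous_on {C..D} \<psi>2"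
    and le: "\<And>\<theta>. \<theta> \<in> {C..D} \<Longrightarrow> \<psi>1 \<theta> \<le> \<psi>2 \<theta>"
  shows "compact (region \<psi>1 \<psi>2 C D)"
proof -
  let ?g = "\<lambda>(t::real,\<theta>::real). ((1-t) * \<psi>1 \<theta> + t * \<psi>2 \<theta>, \<theta>)"
  have "region \<psi>1 \<psi>2 C D \<subseteq> ?g ` ({0..1} \<times> {C..D})"
  proof
    fix x assume "x \<in> region \<psi>1 \<psi>2 C D"
    then obtain y \<theta> where x: "x = (y,\<theta>)" "C \<le> \<theta>" "\<theta> \<le> D" "\<psi>1 \<theta> \<le> y" "y \<le> \<psi>2 \<theta>"
      by (auto simp: region_def)
    show "x \<in> ?g ` ({0..1} \<times> {C..D})"
    proof (cases "\<psi>1 \<theta> = \<psi>2 \<theta>")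
      case True
      then show ?thesis using x by (intro image_eqI[of _ _ "(0,\<theta>)"]) auto
    next
      case False
      define t where "t = (y - \<psi>1 \<theta>) / (\<psi>2 \<theta> - \<psi>1 \<theta>)"
      have h: "\<psi>2 \<theta> - \<psi>1 \<theta> > 0" using x False by auto
      have t01: "t \<in> {0..1}" using x h by (auto simp: t_def field_simps)
      have "t * (\<psi>2 \<theta> - \<psi>1 \<theta>) = y - \<psi>1 \<theta>" using h by (simp add: t_def)
      then have "(1-t) * \<psi>1 \<theta> + t * \<psi>2 \<theta> = y" by (simp add: algebra_simps)
      moreover
      ultimately show ?thesis using x t01 by (intro image_eqI[of _ _ "(t,\<theta>)"]) auto
    qed
  qed
  moreover have "?g ` ({0..1} \<times> {C..D}) \<subseteq> region \<psi>1 \<psi>2 C D"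
  proof clarify
    fix t \<theta> :: real assume "t \<in> {0..1}" "\<theta> \<in> {C..D}"
    show "((1-t) * \<psi>1 \<theta> + t * \<psi>2 \<theta>, \<theta>) \<in> region \<psi>1 \<psi>2 C D"
    proof -
      have "\<psi>1 \<theta> \<le> \<psi>2 \<theta>" using le \<open>\<theta> \<in> {C..D}\<close> by auto
      have e1: "(1-t) * \<psi>1 \<theta> + t * \<psi>2 \<theta> - \<psi>1 \<theta> = t * (\<psi>2 \<theta> - \<psi>1 \<theta>)"
        by (simp add: algebra_simps)
      have e2: "\<psi>2 \<theta> - ((1-t) * \<psi>1 \<theta> + t * \<psi>2 \<theta>) = (1-t) * (\<psi>2 \<theta> - \<psi>1 \<theta>)"
        by (simp add: algebra_simps)
      have n1: "t * (\<psi>2 \<theta> - \<psi>1 \<theta>) \<ge> 0" and n2: "(1-t) * (\<psi>2 \<theta> - \<psi>1 \<theta>) \<ge> 0"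
        using \<open>t \<in> {0..1}\<close> \<open>\<psi>1 \<theta> \<le> \<psi>2 \<theta>\<close> by auto
      have "\<psi>1 \<theta> \<le> (1-t) * \<psi>1 \<theta> + t * \<psi>2 \<theta>" "(1-t) * \<psi>1 \<theta> + t * \<psi>2 \<theta> \<le> \<psi>2 \<theta>"
        using e1 e2 n1 n2 by (smt (verit))+
      then show ?thesis using \<open>\<theta> \<in> {C..D}\<close> by (auto simp: region_def)
    qed
  qed
  ultimately have eq: "region \<psi>1 \<psi>2 C D = ?g ` ({0..1} \<times> {C..D})" by blast
  have c1: "continuous_on ({0..1} \<times> {C..D}) (\<lambda>p::real\<times>real. \<psi>1 (snd p))"
    by (rule continuous_on_compose2[OF assms(1) continuous_on_snd]) auto
  have c2: "continuous_on ({0..1} \<times> {C..D}) (\<lambda>p::real\<times>real. \<psi>2 (snd p))"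
    by (rule continuous_on_compose2[OF assms(2) continuous_on_snd]) auto
  have "?g = (\<lambda>p. ((1 - fst p) * \<psi>1 (snd p) + fst p * \<psi>2 (snd p), snd p))" by auto
  moreover have "continuous_on ({0..1} \<times> {C..D}) (\<lambda>p. ((1 - fst p) * \<psi>1 (snd p) + fst p * \<psi>2 (snd p), snd p))"
    by (intro continuous_intros c1 c2)
  ultimately have "continuous_on ({0..1} \<times> {C..D}) ?g" by simp
  then show ?thesis unfolding eq by (intro compact_continuous_image compact_Times) auto
qed




lemma lint_iter:
  fixes F :: "real \<times> real \<Rightarrow> real" and \<psi>1 \<psi>2 :: "real \<Rightarrow> real"
  assumes c1: "continuous_on {C..D} \<psi>1" and c2: "continuous_on {C..D} \<psi>2"
    and le: "\<And>\<theta>. \<theta> \<in> {C..D} \<Longrightarrow> \<psi>1 \<theta> \<le> \<psi>2 \<theta>"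
    and cF: "continuous_on UNIV F"
  shows "(LINT x:region \<psi>1 \<psi>2 C D|lborel. F x) = integral {C..D} (\<lambda>\<theta>. integral {\<psi>1 \<theta>..\<psi>2 \<theta>} (\<lambda>y. F (y,\<theta>)))"
proof -
  define a where "a = region \<psi>1 \<psi>2 C D"
  define G where "G = (\<lambda>\<theta>. integral {\<psi>1 \<theta>..\<psi>2 \<theta>} (\<lambda>y. F (y,\<theta>)))"
  have int: "integrable lborel (\<lambda>x. indicator a x *\<^sub>R F x)"
    unfolding a_def by (rule borel_integrable_compact[OF region_compact[OF c1 c2 le]])
      (auto intro: continuous_on_subset[OF cF])
  define f where "f = (\<lambda>y \<theta>. indicator a (y,\<theta>) *\<^sub>R F (y,\<theta>))"
  have eq: "case_prod f = (\<lambda>x. indicator a x *\<^sub>R F x)" by (auto simp: f_def fun_eq_iff)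
  have int2: "integrable (lborel \<Otimes>\<^sub>M lborel) (case_prod f)"
    using int by (simp add: eq lborel_prod)
  have inner: "(\<integral>y. f y \<theta> \<partial>lborel) = indicator {C..D} \<theta> * G \<theta>" for \<theta>
  proof (cases "\<theta> \<in> {C..D}")
    case True
    have "f y \<theta> = indicator {\<psi>1 \<theta>..\<psi>2 \<theta>} y *\<^sub>R F (y,\<theta>)" for y
      using True by (auto simp: f_def a_def region_def indicator_def)
    then have "(\<integral>y. f y \<theta> \<partial>lborel) = (LINT y:{\<psi>1 \<theta>..\<psi>2 \<theta>}|lborel. F (y,\<theta>))"
      by (simp add: set_lebesgue_integral_def)
    also have "\<dots> = G \<theta>" unfolding G_def
    proof (rule set_borel_integral_eq_integral(2))
      have "continuous_on UNIV (\<lambda>y. F (y,\<theta>))"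
        by (rule continuous_on_compose2[OF cF]) (auto intro!: continuous_intros)
      then show "set_integrable lborel {\<psi>1 \<theta>..\<psi>2 \<theta>} (\<lambda>y. F (y, \<theta>))"
        unfolding set_integrable_def
        by (intro borel_integrable_compact) (auto intro: continuous_on_subset)
    qed
    finally show ?thesis using True by simp
  next
    case False
    then have "f y \<theta> = 0" for y by (auto simp: f_def a_def region_def indicator_def)
    then show ?thesis using False by simp
  qed
  have "(LINT x:a|lborel. F x) = integral\<^sup>L (lborel \<Otimes>\<^sub>M lborel) (case_prod f)"
    by (simp add: set_lebesgue_integral_def eq lborel_prod)
  also have "\<dots> = (\<integral>\<theta>. (\<integral>y. f y \<theta> \<partial>lborel) \<partial>lborel)"
    by (rule lborel_pair.integral_snd[OF int2, symmetric])
  also have "\<dots> = (LINT \<theta>:{C..D}|lborel. G \<theta>)"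
    by (simp add: inner set_lebesgue_integral_def)
  also have "\<dots> = integral {C..D} G"
  proof (rule set_borel_integral_eq_integral(2))
    have "integrable lborel (\<lambda>\<theta>. \<integral>y. f y \<theta> \<partial>lborel)"
      by (rule lborel_pair.integrable_snd[OF int2])
    then show "set_integrable lborel {C..D} G"
      by (simp add: inner set_integrable_def)
  qed
  finally show ?thesis unfolding a_def G_def .
qed




lemma L1:
  fixes f f' :: "real \<Rightarrow> real"
  assumes pq: "p < q"
    and d: "\<And>x. x \<in> {p..q} \<Longrightarrow> (f has_real_derivative f' x) (at x within {p..q})"
    and c: "continuous_on {p..q} f'"
  shows "(q-p) * (\<bar>f p\<bar> + \<bar>f q\<bar>) \<le> 2 * integral {p..q} (\<lambda>x. \<bar>f x\<bar>) + (q-p) * integral {p..q} (\<lambda>x. \<bar>f' x\<bar>)"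
proof -
  have cf: "continuous_on {p..q} f" by (rule DERIV_continuous_on[OF d])
  have caf: "continuous_on {p..q} (\<lambda>x. \<bar>f' x\<bar>)" by (intro continuous_intros c)
  have ftc: "integral {u..w} f' = f w - f u" if "p \<le> u" "u \<le> w" "w \<le> q" for u w
  proof -
    have "(f' has_integral (f w - f u)) {u..w}"
    proof (rule fundamental_theorem_of_calculus[OF \<open>u \<le> w\<close>])
      fix x assume "x \<in> {u..w}"
      then have "x \<in> {p..q}" "{u..w} \<subseteq> {p..q}" using that by auto
      then show "(f has_vector_derivative f' x) (at x within {u..w})"
        using d DERIV_subset has_real_derivative_iff_has_vector_derivative by blast
    qed
    then show ?thesis by (rule integral_unique)
  qed
  have bnd: "\<bar>f w - f u\<bar> \<le> integral {u..w} (\<lambda>x. \<bar>f' x\<bar>)" if "p \<le> u" "u \<le> w" "w \<le> q" for u w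
  proof -
    have sub: "{u..w} \<subseteq> {p..q}" using that by auto
    have "\<bar>integral {u..w} f'\<bar> \<le> integral {u..w} (\<lambda>x. \<bar>f' x\<bar>)"
      using integral_norm_bound_integral[of f' "{u..w}" "\<lambda>x. \<bar>f' x\<bar>"]
        integrable_continuous_interval[OF continuous_on_subset[OF c sub]]
        integrable_continuous_interval[OF continuous_on_subset[OF caf sub]] by auto
    then show ?thesis using ftc[OF that] by simp
  qed
  define I where "I = integral {p..q} (\<lambda>x. \<bar>f' x\<bar>)"
  have pw: "\<bar>f p\<bar> + \<bar>f q\<bar> \<le> 2 * \<bar>f y\<bar> + I" if "y \<in> {p..q}" for y
  proof -
    have "integral {p..y} (\<lambda>x. \<bar>f' x\<bar>) + integral {y..q} (\<lambda>x. \<bar>f' x\<bar>) = I"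
      unfolding I_def using that Henstock_Kurzweil_Integration.integral_combine[OF _ _ integrable_continuous_interval[OF caf]] by auto
    moreover have "\<bar>f y - f p\<bar> \<le> integral {p..y} (\<lambda>x. \<bar>f' x\<bar>)" using bnd that by auto
    moreover have "\<bar>f q - f y\<bar> \<le> integral {y..q} (\<lambda>x. \<bar>f' x\<bar>)" using bnd that by auto
    ultimately show ?thesis by linarith
  qed
  have "integral {p..q} (\<lambda>y. \<bar>f p\<bar> + \<bar>f q\<bar>) \<le> integral {p..q} (\<lambda>y. 2 * \<bar>f y\<bar> + I)"
    by (intro integral_le pw integrable_continuous_interval continuous_intros cf) auto
  also have "\<dots> = 2 * integral {p..q} (\<lambda>y. \<bar>f y\<bar>) + (q - p) * I"
    using pq by (subst integral_add) (auto intro!: integrable_continuous_interval continuous_intros cf)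
  finally show ?thesis using pq by (simp add: I_def)
qed




lemma chain_v:
  fixes v :: "real \<times> real \<Rightarrow> real" and g :: "real \<Rightarrow> real \<times> real"
  assumes dv: "\<And>x. (v has_derivative blinfun_apply (v' x)) (at x)"
    and dg: "(g has_vector_derivative g') (at t within S)"
  shows "((\<lambda>s. v (g s)) has_real_derivative blinfun_apply (v' (g t)) g') (at t within S)"
proof -
  have "((\<lambda>s. v (g s)) has_derivative (\<lambda>s. blinfun_apply (v' (g t)) (s *\<^sub>R g'))) (at t within S)"
    using has_derivative_compose[OF dg[unfolded has_vector_derivative_def] dv] .
  moreover have "(\<lambda>s. blinfun_apply (v' (g t)) (s *\<^sub>R g')) = (*) (blinfun_apply (v' (g t)) g')"
    by (auto simp: blinfun.scaleR_right fun_eq_iff)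
  ultimately show ?thesis unfolding has_field_derivative_def by metis
qed

locale bsetup =
  fixes C D :: real
    and \<psi>1 \<psi>2 \<psi>1' \<psi>2' :: "real \<Rightarrow> real"
    and v :: "real \<times> real \<Rightarrow> real"
    and v' :: "real \<times> real \<Rightarrow> ((real \<times> real) \<Rightarrow>\<^sub>L real)"
  assumes CD: "C < D"
    and d1: "\<And>\<theta>. \<theta> \<in> {C..D} \<Longrightarrow> (\<psi>1 has_real_derivative \<psi>1' \<theta>) (at \<theta> within {C..D})"
    and c1: "continuous_on {C..D} \<psi>1'"
    and d2: "\<And>\<theta>. \<theta> \<in> {C..D} \<Longrightarrow> (\<psi>2 has_real_derivative \<psi>2' \<theta>) (at \<theta> within {C..D})"
    and c2: "continuous_on {C..D} \<psi>2'"
    and lt: "\<And>\<theta>. \<theta> \<in> {C..D} \<Longrightarrow> \<psi>1 \<theta> < \<psi>2 \<theta>"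
    and dv: "\<And>x. (v has_derivative blinfun_apply (v' x)) (at x)"
    and cv: "continuous_on UNIV v'"
begin

lemma cpsi1: "continuous_on {C..D} \<psi>1" by (rule DERIV_continuous_on[OF d1])
lemma cpsi2: "continuous_on {C..D} \<psi>2" by (rule DERIV_continuous_on[OF d2])

lemma cv0: "continuous_on UNIV v"
  using dv has_derivative_continuous continuous_at_imp_continuous_on by blast

lemma cVy: "continuous_on UNIV (\<lambda>x. blinfun_apply (v' x) (1,0))"
  by (intro continuous_intros cv)
lemma cVt: "continuous_on UNIV (\<lambda>x. blinfun_apply (v' x) (0,1))"
  by (intro continuous_intros cv)
lemma cgrad: "continuous_on UNIV (\<lambda>x. grad_norm (v' x))"
  unfolding grad_norm_def by (intro continuous_intros cVy cVt)

definition P :: "real \<Rightarrow> real \<Rightarrow> real \<times> real" where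
  "P t \<theta> = (\<psi>1 \<theta> + t * (\<psi>2 \<theta> - \<psi>1 \<theta>), \<theta>)"

lemma contS: "continuous_on {C..D} \<phi> \<Longrightarrow> continuous_on ({0..1}\<times>{C..D}) (\<lambda>p. \<phi> (snd p))"
  by (rule continuous_on_compose2[OF _ continuous_on_snd]) auto

lemma contP: "continuous_on UNIV U \<Longrightarrow> continuous_on ({0..1}\<times>{C..D}) (\<lambda>p. U (P (fst p) (snd p)))"
  unfolding P_def
  by (rule continuous_on_compose2[where t=UNIV]) (auto intro!: continuous_intros contS cpsi1 cpsi2)

lemma swapc: fixes g :: "real \<Rightarrow> real \<Rightarrow> real" shows "continuous_on ({0..1}\<times>{C..D}) (\<lambda>p. g (fst p) (snd p)) \<Longrightarrow>
   continuous_on ({C..D}\<times>{0..1}) (\<lambda>p. g (snd p) (fst p))"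
proof -
  assume a: "continuous_on ({0..1}\<times>{C..D}) (\<lambda>p. g (fst p) (snd p))"
  have "continuous_on ({C..D}\<times>{0..1}) (\<lambda>p::real\<times>real. (snd p, fst p))" by (intro continuous_intros)
  moreover have "(\<lambda>p::real\<times>real. (snd p, fst p)) ` ({C..D}\<times>{0..1}) \<subseteq> {0..1}\<times>{C..D}" by auto
  ultimately show ?thesis
    using continuous_on_compose2[OF a, of "{C..D}\<times>{0..1}" "\<lambda>p. (snd p, fst p)"] by simp
qed

lemma contP_t: "continuous_on UNIV U \<Longrightarrow> \<theta> \<in> {C..D} \<Longrightarrow> continuous_on {0..1} (\<lambda>t. U (P t \<theta>))"
  unfolding P_def by (rule continuous_on_compose2[where t=UNIV]) (auto intro!: continuous_intros)

lemma contP_th: "continuous_on UNIV U \<Longrightarrow> continuous_on {C..D} (\<lambda>\<theta>. U (P t \<theta>))"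
  unfolding P_def by (rule continuous_on_compose2[where t=UNIV]) (auto intro!: continuous_intros cpsi1 cpsi2)

lemma dP_t: "((\<lambda>t. v (P t \<theta>)) has_real_derivative (\<psi>2 \<theta> - \<psi>1 \<theta>) * blinfun_apply (v' (P t \<theta>)) (1,0)) (at t within S)"
proof -
  have "((\<lambda>t. P t \<theta>) has_vector_derivative (\<psi>2 \<theta> - \<psi>1 \<theta>, 0)) (at t within S)"
    unfolding P_def
    by (intro derivative_eq_intros has_real_derivative_iff_has_vector_derivative[THEN iffD1]) auto
  from chain_v[OF dv this] show ?thesis
    using blinfun.scaleR_right[of "v' (P t \<theta>)" "\<psi>2 \<theta> - \<psi>1 \<theta>" "(1,0)"] by simp
qed

lemma dP_th:
  assumes "\<theta> \<in> {C..D}"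
  shows "((\<lambda>\<theta>. v (P t \<theta>)) has_real_derivative
     (\<psi>1' \<theta> + t * (\<psi>2' \<theta> - \<psi>1' \<theta>)) * blinfun_apply (v' (P t \<theta>)) (1,0) + blinfun_apply (v' (P t \<theta>)) (0,1))
     (at \<theta> within {C..D})"
proof -
  have "((\<lambda>\<theta>. \<psi>1 \<theta> + t * (\<psi>2 \<theta> - \<psi>1 \<theta>)) has_real_derivative (\<psi>1' \<theta> + t * (\<psi>2' \<theta> - \<psi>1' \<theta>))) (at \<theta> within {C..D})"
    using d1[OF assms] d2[OF assms] by (auto intro!: derivative_eq_intros)
  note dd = this
  have "((\<lambda>\<theta>. P t \<theta>) has_vector_derivative (\<psi>1' \<theta> + t * (\<psi>2' \<theta> - \<psi>1' \<theta>), 1)) (at \<theta> within {C..D})"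
    unfolding P_def
    by (intro has_vector_derivative_Pair has_real_derivative_iff_has_vector_derivative[THEN iffD1] dd)
      (auto intro!: derivative_eq_intros)
  from chain_v[OF dv this] show ?thesis
    using blinfun.scaleR_right[of "v' (P t \<theta>)" "\<psi>1' \<theta> + t * (\<psi>2' \<theta> - \<psi>1' \<theta>)" "(1,0)"]
      blinfun.add_right[of "v' (P t \<theta>)" "(\<psi>1' \<theta> + t * (\<psi>2' \<theta> - \<psi>1' \<theta>), 0)" "(0,1)"] by simp
qed

end



lemma subst01:
  fixes g :: "real \<Rightarrow> real"
  assumes pq: "p \<le> q" and cg: "continuous_on {p..q} g"
  shows "integral {p..q} g = (q-p) * integral {0..1} (\<lambda>t. g (p + t*(q-p)))"
proof -
  have "((\<lambda>t. (q-p) *\<^sub>R g (p + t*(q-p))) has_integral integral {p + 0*(q-p)..p + 1*(q-p)} g) {0..1}"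
  proof (rule has_integral_substitution[where c=p and d=q])
    show "(\<lambda>t. p + t*(q-p)) ` {0..1} \<subseteq> {p..q}"
    proof clarify
      fix t :: real assume t: "t \<in> {0..1}"
      have "t*(q-p) \<le> 1*(q-p)" by (rule mult_right_mono) (use t pq in auto)
      moreover have "0 \<le> t*(q-p)" using t pq by auto
      ultimately show "p + t*(q-p) \<in> {p..q}" by auto
    qed
    show "((\<lambda>t. p + t*(q-p)) has_real_derivative (q-p)) (at x within {0..1})" for x
      by (auto intro!: derivative_eq_intros)
  qed (use pq cg in auto)
  then have "integral {0..1} (\<lambda>t. (q-p) * g (p + t*(q-p))) = integral {p..q} g"
    by (intro integral_unique) simp
  then show ?thesis by simp
qed

lemma arc_graph:
  fixes \<psi> \<psi>' :: "real \<Rightarrow> real"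
  assumes CD: "C < D" and d: "\<And>\<theta>. \<theta> \<in> {C..D} \<Longrightarrow> (\<psi> has_real_derivative \<psi>' \<theta>) (at \<theta> within {C..D})"
  shows "arclength_integral F (\<lambda>\<theta>. (\<psi> \<theta>, \<theta>)) C D = integral {C..D} (\<lambda>\<theta>. F (\<psi> \<theta>, \<theta>) * sqrt ((\<psi>' \<theta>)^2 + 1))"
  unfolding arclength_integral_def
proof (rule integral_cong)
  fix \<theta> assume \<theta>: "\<theta> \<in> {C..D}"
  have "((\<lambda>\<theta>. (\<psi> \<theta>, \<theta>)) has_vector_derivative (\<psi>' \<theta>, 1)) (at \<theta> within {C..D})"
    by (intro has_vector_derivative_Pair has_real_derivative_iff_has_vector_derivative[THEN iffD1] d[OF \<theta>] has_vector_derivative_id)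
  then have "vector_derivative (\<lambda>\<theta>. (\<psi> \<theta>, \<theta>)) (at \<theta> within {C..D}) = (\<psi>' \<theta>, 1)"
    by (rule vector_derivative_within_closed_interval[OF CD \<theta>])
  then show "F (\<psi> \<theta>, \<theta>) * norm (vector_derivative (\<lambda>\<theta>. (\<psi> \<theta>, \<theta>)) (at \<theta> within {C..D})) = F (\<psi> \<theta>, \<theta>) * sqrt ((\<psi>' \<theta>)^2 + 1)"
    by (simp add: norm_Pair)
qed

lemma arc_seg:
  assumes pq: "p < q"
  shows "arclength_integral F (\<lambda>y. (y, c)) p q = integral {p..q} (\<lambda>y. F (y, c))"
  unfolding arclength_integral_def
proof (rule integral_cong)
  fix y assume y: "y \<in> {p..q}"
  have "((\<lambda>y. (y, c)) has_vector_derivative (1, 0)) (at y within {p..q})"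
    by (intro has_vector_derivative_Pair has_vector_derivative_id has_vector_derivative_const)
  then have "vector_derivative (\<lambda>y. (y, c)) (at y within {p..q}) = (1, 0)"
    by (rule vector_derivative_within_closed_interval[OF pq y])
  then show "F (y, c) * norm (vector_derivative (\<lambda>y. (y, c)) (at y within {p..q})) = F (y, c)"
    by (simp add: norm_Pair)
qed

lemma cs_bound:
  fixes B a b :: real
  assumes B: "B \<ge> 1"
  shows "B * \<bar>a\<bar> + \<bar>b\<bar> \<le> sqrt 2 * B * sqrt (a^2 + b^2)"
proof -
  have "0 \<le> (B * \<bar>a\<bar> - \<bar>b\<bar>)^2" by simp
  then have 1: "2 * (B * \<bar>a\<bar>) * \<bar>b\<bar> \<le> (B * \<bar>a\<bar>)^2 + \<bar>b\<bar>^2" by (simp add: power2_diff)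
  have "b^2 \<le> B^2 * b^2" using B by (simp add: mult_le_cancel_right1 one_le_power)
  then have "(B * \<bar>a\<bar> + \<bar>b\<bar>)^2 \<le> 2 * B^2 * (a^2 + b^2)"
    using 1 by (simp add: power2_sum power_mult_distrib algebra_simps)
  then have "B * \<bar>a\<bar> + \<bar>b\<bar> \<le> sqrt (2 * B^2 * (a^2 + b^2))" by (rule real_le_rsqrt)
  also have "\<dots> = sqrt 2 * B * sqrt (a^2 + b^2)" using B by (simp add: real_sqrt_mult)
  finally show ?thesis .
qed

context bsetup begin

lemma TB_bound:
  assumes \<theta>: "\<theta> \<in> {C..D}"
  shows "\<bar>v (\<psi>1 \<theta>, \<theta>)\<bar> * sqrt ((\<psi>1' \<theta>)^2 + 1) + \<bar>v (\<psi>2 \<theta>, \<theta>)\<bar> * sqrt ((\<psi>2' \<theta>)^2 + 1)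
     \<le> integral {0..1} (\<lambda>t. 2 * sqrt (1 + (max \<bar>\<psi>1' \<theta>\<bar> \<bar>\<psi>2' \<theta>\<bar>)^2) * \<bar>v (P t \<theta>)\<bar>
          + sqrt (1 + (max \<bar>\<psi>1' \<theta>\<bar> \<bar>\<psi>2' \<theta>\<bar>)^2) * \<bar>(\<psi>2 \<theta> - \<psi>1 \<theta>) * blinfun_apply (v' (P t \<theta>)) (1,0)\<bar>)"
proof -
  define A where "A = sqrt (1 + (max \<bar>\<psi>1' \<theta>\<bar> \<bar>\<psi>2' \<theta>\<bar>)^2)"
  define I1 where "I1 = integral {0..1} (\<lambda>t. \<bar>v (P t \<theta>)\<bar>)"
  define I2 where "I2 = integral {0..1} (\<lambda>t. \<bar>(\<psi>2 \<theta> - \<psi>1 \<theta>) * blinfun_apply (v' (P t \<theta>)) (1,0)\<bar>)"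
  have L: "(1-0) * (\<bar>v (P 0 \<theta>)\<bar> + \<bar>v (P 1 \<theta>)\<bar>) \<le> 2 * I1 + (1-0) * I2"
    unfolding I1_def I2_def
    by (rule L1[where f="\<lambda>t. v (P t \<theta>)"]) (auto intro!: dP_t continuous_intros contP_t[OF cVy \<theta>])
  have P01: "P 0 \<theta> = (\<psi>1 \<theta>, \<theta>)" "P 1 \<theta> = (\<psi>2 \<theta>, \<theta>)" by (auto simp: P_def)
  have "\<bar>\<psi>1' \<theta>\<bar>^2 \<le> (max \<bar>\<psi>1' \<theta>\<bar> \<bar>\<psi>2' \<theta>\<bar>)^2" "\<bar>\<psi>2' \<theta>\<bar>^2 \<le> (max \<bar>\<psi>1' \<theta>\<bar> \<bar>\<psi>2' \<theta>\<bar>)^2"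
    by (rule power_mono; simp)+
  then have s1: "sqrt ((\<psi>1' \<theta>)^2 + 1) \<le> A" and s2: "sqrt ((\<psi>2' \<theta>)^2 + 1) \<le> A"
    unfolding A_def by (auto simp: add.commute)
  have A0: "A \<ge> 0" unfolding A_def by simp
  have "\<bar>v (\<psi>1 \<theta>, \<theta>)\<bar> * sqrt ((\<psi>1' \<theta>)^2 + 1) + \<bar>v (\<psi>2 \<theta>, \<theta>)\<bar> * sqrt ((\<psi>2' \<theta>)^2 + 1)
      \<le> \<bar>v (\<psi>1 \<theta>, \<theta>)\<bar> * A + \<bar>v (\<psi>2 \<theta>, \<theta>)\<bar> * A"
    by (intro add_mono mult_left_mono s1 s2) auto
  also have "\<dots> = A * (\<bar>v (P 0 \<theta>)\<bar> + \<bar>v (P 1 \<theta>)\<bar>)" by (simp add: P01 algebra_simps)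
  also have "\<dots> \<le> A * (2 * I1 + I2)" using L A0 by (intro mult_left_mono) auto
  also have "\<dots> = integral {0..1} (\<lambda>t. 2 * A * \<bar>v (P t \<theta>)\<bar> + A * \<bar>(\<psi>2 \<theta> - \<psi>1 \<theta>) * blinfun_apply (v' (P t \<theta>)) (1,0)\<bar>)"
    unfolding I1_def I2_def
    by (subst integral_add) (auto intro!: integrable_continuous_interval continuous_intros contP_t[OF cVy \<theta>] contP_t[OF cv0 \<theta>] simp: algebra_simps)
  finally show ?thesis unfolding A_def .
qed

definition Dth where
  "Dth t \<theta> = (\<psi>2' \<theta> - \<psi>1' \<theta>) * v (P t \<theta>)
     + ((\<psi>1' \<theta> + t * (\<psi>2' \<theta> - \<psi>1' \<theta>)) * blinfun_apply (v' (P t \<theta>)) (1,0) + blinfun_apply (v' (P t \<theta>)) (0,1)) * (\<psi>2 \<theta> - \<psi>1 \<theta>)"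

definition R where
  "R t \<theta> = 2 / (D - C) * \<bar>(\<psi>2 \<theta> - \<psi>1 \<theta>) * v (P t \<theta>)\<bar> + \<bar>Dth t \<theta>\<bar>"

lemma V_bound:
  "(D-C) * (\<bar>(\<psi>2 C - \<psi>1 C) * v (P t C)\<bar> + \<bar>(\<psi>2 D - \<psi>1 D) * v (P t D)\<bar>)
    \<le> 2 * integral {C..D} (\<lambda>\<theta>. \<bar>(\<psi>2 \<theta> - \<psi>1 \<theta>) * v (P t \<theta>)\<bar>) + (D-C) * integral {C..D} (\<lambda>\<theta>. \<bar>Dth t \<theta>\<bar>)"
proof (rule L1[where f = "\<lambda>\<theta>. (\<psi>2 \<theta> - \<psi>1 \<theta>) * v (P t \<theta>)"])
  show "C < D" by (rule CD)
  show "((\<lambda>\<theta>. (\<psi>2 \<theta> - \<psi>1 \<theta>) * v (P t \<theta>)) has_real_derivative Dth t x) (at x within {C..D})"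
    if x: "x \<in> {C..D}" for x
    unfolding Dth_def using DERIV_mult[OF DERIV_diff[OF d2[OF x] d1[OF x]] dP_th[OF x]] .
  show "continuous_on {C..D} (Dth t)"
    unfolding Dth_def
    by (intro continuous_intros c1 c2 cpsi1 cpsi2 contP_th[OF cv0] contP_th[OF cVy] contP_th[OF cVt])
qed

end



context bsetup begin

lemma contDth: "continuous_on {C..D} (Dth t)"
  unfolding Dth_def
  by (intro continuous_intros c1 c2 cpsi1 cpsi2 contP_th[OF cv0] contP_th[OF cVy] contP_th[OF cVt])

lemma contR: "continuous_on ({0..1}\<times>{C..D}) (\<lambda>p. R (fst p) (snd p))"
  unfolding R_def Dth_def
  by (intro continuous_intros contP[OF cv0] contP[OF cVy] contP[OF cVt] contS[OF cpsi1] contS[OF cpsi2]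
      contS[OF c1] contS[OF c2])

lemma V_bound2:
  "\<bar>(\<psi>2 C - \<psi>1 C) * v (P t C)\<bar> + \<bar>(\<psi>2 D - \<psi>1 D) * v (P t D)\<bar> \<le> integral {C..D} (R t)"
proof -
  define X where "X = \<bar>(\<psi>2 C - \<psi>1 C) * v (P t C)\<bar> + \<bar>(\<psi>2 D - \<psi>1 D) * v (P t D)\<bar>"
  define I1 where "I1 = integral {C..D} (\<lambda>\<theta>. \<bar>(\<psi>2 \<theta> - \<psi>1 \<theta>) * v (P t \<theta>)\<bar>)"
  define I2 where "I2 = integral {C..D} (\<lambda>\<theta>. \<bar>Dth t \<theta>\<bar>)"
  have e: "integral {C..D} (R t) = 2 / (D - C) * I1 + I2"
    unfolding R_def I1_def I2_def
    using CD by (subst integral_add) (auto intro!: integrable_continuous_interval continuous_intros cpsi1 cpsi2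
        contP_th[OF cv0] contDth)
  have V: "(D-C) * X \<le> 2 * I1 + (D-C) * I2" unfolding X_def I1_def I2_def by (rule V_bound)
  have DC: "D - C > 0" using CD by simp
  from V DC have "X \<le> (2 * I1 + (D-C) * I2) / (D - C)"
    by (simp add: pos_le_divide_eq mult.commute)
  also have "\<dots> = 2 / (D - C) * I1 + I2" using DC by (simp add: field_simps)
  finally show ?thesis unfolding X_def e .
qed

lemma Vert:
  "integral {\<psi>1 C..\<psi>2 C} (\<lambda>y. \<bar>v (y,C)\<bar>) + integral {\<psi>1 D..\<psi>2 D} (\<lambda>y. \<bar>v (y,D)\<bar>)
    \<le> integral {C..D} (\<lambda>\<theta>. integral {0..1} (\<lambda>t. R t \<theta>))"
proof -
  have e: "integral {\<psi>1 c..\<psi>2 c} (\<lambda>y. \<bar>v (y,c)\<bar>) = integral {0..1} (\<lambda>t. \<bar>(\<psi>2 c - \<psi>1 c) * v (P t c)\<bar>)"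
    if c: "c \<in> {C..D}" for c
  proof -
    have "continuous_on UNIV (\<lambda>y. \<bar>v (y,c)\<bar>)"
      by (intro continuous_intros continuous_on_compose2[OF cv0]) auto
    then have "integral {\<psi>1 c..\<psi>2 c} (\<lambda>y. \<bar>v (y,c)\<bar>)
        = (\<psi>2 c - \<psi>1 c) * integral {0..1} (\<lambda>t. \<bar>v (\<psi>1 c + t*(\<psi>2 c - \<psi>1 c), c)\<bar>)"
      using lt[OF c] by (intro subst01) (auto intro: continuous_on_subset)
    also have "\<dots> = integral {0..1} (\<lambda>t. \<bar>(\<psi>2 c - \<psi>1 c) * v (P t c)\<bar>)"
      using lt[OF c] by (simp add: P_def abs_mult)
    finally show ?thesis .
  qed
  have CC: "C \<in> {C..D}" and DD: "D \<in> {C..D}" using CD by auto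
  have ci: "continuous_on {0..1} (\<lambda>t. \<bar>(\<psi>2 c - \<psi>1 c) * v (P t c)\<bar>)" if "c \<in> {C..D}" for c
    by (intro continuous_intros contP_t[OF cv0 that])
  have "integral {\<psi>1 C..\<psi>2 C} (\<lambda>y. \<bar>v (y,C)\<bar>) + integral {\<psi>1 D..\<psi>2 D} (\<lambda>y. \<bar>v (y,D)\<bar>)
      = integral {0..1} (\<lambda>t. \<bar>(\<psi>2 C - \<psi>1 C) * v (P t C)\<bar> + \<bar>(\<psi>2 D - \<psi>1 D) * v (P t D)\<bar>)"
    unfolding e[OF CC] e[OF DD]
    by (rule integral_add[symmetric]) (intro integrable_continuous_interval ci CC DD)+
  also have "\<dots> \<le> integral {0..1} (\<lambda>t. integral {C..D} (R t))"
  proof (rule integral_le)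
    show "(\<lambda>t. \<bar>(\<psi>2 C - \<psi>1 C) * v (P t C)\<bar> + \<bar>(\<psi>2 D - \<psi>1 D) * v (P t D)\<bar>) integrable_on {0..1}"
      by (intro integrable_continuous_interval continuous_intros ci[OF CC, unfolded] ci[OF DD]
          contP_t[OF cv0 CC] contP_t[OF cv0 DD])
    have "continuous_on {0..1} (\<lambda>t. integral (cbox C D) (R t))"
      by (rule integral_continuous_on_param) (use contR in \<open>simp add: case_prod_beta' cbox_interval\<close>)
    then show "(\<lambda>t. integral {C..D} (R t)) integrable_on {0..1}"
      by (simp add: cbox_interval integrable_continuous_interval)
    show "\<bar>(\<psi>2 C - \<psi>1 C) * v (P t C)\<bar> + \<bar>(\<psi>2 D - \<psi>1 D) * v (P t D)\<bar> \<le> integral {C..D} (R t)" for t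
      by (rule V_bound2)
  qed
  also have "\<dots> = integral {C..D} (\<lambda>\<theta>. integral {0..1} (\<lambda>t. R t \<theta>))"
  proof -
    have "continuous_on (cbox (0,C) (1,D)) (\<lambda>(x,y). R x y)"
      using contR by (simp only: cbox_Pair_eq cbox_interval[of "0::real" 1] cbox_interval[of C D] case_prod_beta')
    from integral_swap_continuous[OF this] show ?thesis by (simp add: cbox_interval)
  qed
  finally show ?thesis .
qed

lemma PW:
  fixes S Mi :: real
  assumes t: "t \<in> {0..1}" and \<theta>: "\<theta> \<in> {C..D}"
    and Sb: "(sqrt (1 + (max \<bar>\<psi>1' \<theta>\<bar> \<bar>\<psi>2' \<theta>\<bar>)^2) + 2 * max \<bar>\<psi>1' \<theta>\<bar> \<bar>\<psi>2' \<theta>\<bar>) / (\<psi>2 \<theta> - \<psi>1 \<theta>) \<le> S"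
    and Mb: "max \<bar>\<psi>1' \<theta>\<bar> \<bar>\<psi>2' \<theta>\<bar> \<le> Mi"
  shows "2 * sqrt (1 + (max \<bar>\<psi>1' \<theta>\<bar> \<bar>\<psi>2' \<theta>\<bar>)^2) * \<bar>v (P t \<theta>)\<bar>
      + sqrt (1 + (max \<bar>\<psi>1' \<theta>\<bar> \<bar>\<psi>2' \<theta>\<bar>)^2) * \<bar>(\<psi>2 \<theta> - \<psi>1 \<theta>) * blinfun_apply (v' (P t \<theta>)) (1,0)\<bar>
      + R t \<theta>
     \<le> (\<psi>2 \<theta> - \<psi>1 \<theta>) * (2 * (1 / (D - C) + S) * \<bar>v (P t \<theta>)\<bar>
         + sqrt 2 * (sqrt (1 + Mi^2) + Mi) * grad_norm (v' (P t \<theta>)))"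
proof -
  define m where "m = max \<bar>\<psi>1' \<theta>\<bar> \<bar>\<psi>2' \<theta>\<bar>"
  define a where "a = sqrt (1 + m^2)"
  define hh where "hh = \<psi>2 \<theta> - \<psi>1 \<theta>"
  define w where "w = \<bar>v (P t \<theta>)\<bar>"
  define y where "y = blinfun_apply (v' (P t \<theta>)) (1,0)"
  define z where "z = blinfun_apply (v' (P t \<theta>)) (0,1)"
  define k where "k = \<psi>1' \<theta> + t * (\<psi>2' \<theta> - \<psi>1' \<theta>)"
  define Ai where "Ai = sqrt (1 + Mi^2)"
  define g where "g = grad_norm (v' (P t \<theta>))"
  define c where "c = 2 / (D - C)"
  have hh: "hh > 0" using lt[OF \<theta>] by (simp add: hh_def)
  have m0: "m \<ge> 0" by (simp add: m_def)
  have w0: "w \<ge> 0" by (simp add: w_def)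
  have a1: "a \<ge> 1" by (simp add: a_def)
  have mm: "\<bar>\<psi>1' \<theta>\<bar> \<le> m" "\<bar>\<psi>2' \<theta>\<bar> \<le> m" by (simp_all add: m_def)
  have d21: "\<bar>\<psi>2' \<theta> - \<psi>1' \<theta>\<bar> \<le> 2*m"
  proof -
    have "\<bar>\<psi>2' \<theta> - \<psi>1' \<theta>\<bar> \<le> \<bar>\<psi>2' \<theta>\<bar> + \<bar>\<psi>1' \<theta>\<bar>" by (rule abs_triangle_ineq4)
    then show ?thesis using mm by linarith
  qed
  have kb: "\<bar>k\<bar> \<le> m"
  proof -
    have "k = (1-t)*\<psi>1' \<theta> + t*\<psi>2' \<theta>" by (simp add: k_def algebra_simps)
    then have "\<bar>k\<bar> \<le> \<bar>(1-t)*\<psi>1' \<theta>\<bar> + \<bar>t*\<psi>2' \<theta>\<bar>" by (simp add: abs_triangle_ineq)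
    also have "\<dots> = (1-t)*\<bar>\<psi>1' \<theta>\<bar> + t*\<bar>\<psi>2' \<theta>\<bar>" using t by (simp add: abs_mult)
    also have "\<dots> \<le> (1-t)*m + t*m" using t mm by (intro add_mono mult_left_mono) auto
    also have "\<dots> = m" by (simp add: algebra_simps)
    finally show ?thesis .
  qed
  have Dth_eq: "Dth t \<theta> = (\<psi>2' \<theta> - \<psi>1' \<theta>) * v (P t \<theta>) + (k*y + z)*hh"
    by (simp add: Dth_def k_def y_def z_def hh_def)
  have "\<bar>Dth t \<theta>\<bar> \<le> \<bar>\<psi>2' \<theta> - \<psi>1' \<theta>\<bar> * w + \<bar>k*y + z\<bar>*hh"
    unfolding Dth_eq w_def using hh
    by (metis abs_mult abs_of_pos abs_triangle_ineq)
  also have "\<dots> \<le> (2*m) * w + (m*\<bar>y\<bar> + \<bar>z\<bar>)*hh"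
  proof (intro add_mono mult_right_mono d21 w0)
    have "\<bar>k*y + z\<bar> \<le> \<bar>k\<bar>*\<bar>y\<bar> + \<bar>z\<bar>" by (metis abs_mult abs_triangle_ineq)
    also have "\<dots> \<le> m*\<bar>y\<bar> + \<bar>z\<bar>" using kb by (intro add_mono mult_right_mono) auto
    finally show "\<bar>k*y + z\<bar> \<le> m*\<bar>y\<bar> + \<bar>z\<bar>" .
  qed (use hh in auto)
  finally have Dthb: "\<bar>Dth t \<theta>\<bar> \<le> 2*m*w + m*\<bar>y\<bar>*hh + \<bar>z\<bar>*hh" by (simp add: algebra_simps)
  have Sb': "a + 2*m \<le> S * hh"
    using Sb hh by (simp add: a_def m_def hh_def pos_divide_le_eq)
  have "m^2 \<le> Mi^2" using m0 Mb by (intro power_mono) (auto simp: m_def)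
  then have aAi: "a \<le> Ai" by (simp add: a_def Ai_def)
  have Ai1: "Ai \<ge> 1" by (simp add: Ai_def)
  have Mi0: "Mi \<ge> 0" using m0 Mb m_def by linarith
  have cs: "(Ai+Mi)*\<bar>y\<bar> + \<bar>z\<bar> \<le> sqrt 2 * (Ai+Mi) * g"
    unfolding g_def grad_norm_def y_def z_def
    by (rule cs_bound) (use Ai1 Mi0 in linarith)
  have "(a+m)*\<bar>y\<bar> \<le> (Ai+Mi)*\<bar>y\<bar>" using aAi Mb m_def by (intro mult_right_mono) auto
  with cs have "(a+m)*\<bar>y\<bar> + \<bar>z\<bar> \<le> sqrt 2 * (Ai+Mi) * g" by linarith
  then have f2: "hh*((a+m)*\<bar>y\<bar> + \<bar>z\<bar>) \<le> hh*(sqrt 2 * (Ai+Mi) * g)"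
    using hh by (intro mult_left_mono) auto
  have f2': "a*hh*\<bar>y\<bar> + m*\<bar>y\<bar>*hh + \<bar>z\<bar>*hh \<le> hh*(sqrt 2 * (Ai+Mi) * g)"
    using f2 by (simp add: algebra_simps)
  have "(2*a + 2*m) * w \<le> (2*(S*hh)) * w" using Sb' m0 w0 by (intro mult_right_mono) auto
  then have f1: "2*a*w + 2*m*w \<le> 2*hh*S*w" by (simp add: algebra_simps)
  have eL: "2 * a * w + a * \<bar>hh * y\<bar> + R t \<theta> = 2*a*w + a*hh*\<bar>y\<bar> + c*hh*w + \<bar>Dth t \<theta>\<bar>"
    using hh unfolding R_def c_def w_def hh_def by (simp add: abs_mult)
  have eR: "hh * (2 * (1 / (D - C) + S) * w + sqrt 2 * (Ai + Mi) * g)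
      = c*hh*w + 2*hh*S*w + hh*(sqrt 2 * (Ai+Mi) * g)"
    unfolding c_def by (simp add: algebra_simps)
  have "2 * a * w + a * \<bar>hh * y\<bar> + R t \<theta> \<le> hh * (2 * (1 / (D - C) + S) * w + sqrt 2 * (Ai + Mi) * g)"
    unfolding eL eR using f1 f2' Dthb by linarith
  then show ?thesis unfolding a_def m_def hh_def w_def y_def Ai_def g_def .
qed

end



context bsetup begin

lemma cvpsi: "continuous_on {C..D} \<psi> \<Longrightarrow> continuous_on {C..D} (\<lambda>\<theta>. v (\<psi> \<theta>, \<theta>))"
  by (rule continuous_on_compose2[OF cv0, of _ "\<lambda>\<theta>. (\<psi> \<theta>, \<theta>)"]) (auto intro!: continuous_intros)

lemma main:
  "boundary_integral \<psi>1 \<psi>2 C D (\<lambda>x. \<bar>v x\<bar>)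
     \<le> 2 * (1 / (D - C)
            + (SUP \<theta>\<in>{C..D}. \<bar>(sqrt (1 + (max \<bar>\<psi>1' \<theta>\<bar> \<bar>\<psi>2' \<theta>\<bar>)\<^sup>2) + 2 * max \<bar>\<psi>1' \<theta>\<bar> \<bar>\<psi>2' \<theta>\<bar>) / (\<psi>2 \<theta> - \<psi>1 \<theta>)\<bar>))
          * (LINT x:region \<psi>1 \<psi>2 C D|lborel. \<bar>v x\<bar>)
       + sqrt 2 * (sqrt (1 + (SUP \<theta>\<in>{C..D}. \<bar>max \<bar>\<psi>1' \<theta>\<bar> \<bar>\<psi>2' \<theta>\<bar>\<bar>)\<^sup>2) + (SUP \<theta>\<in>{C..D}. \<bar>max \<bar>\<psi>1' \<theta>\<bar> \<bar>\<psi>2' \<theta>\<bar>\<bar>))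
          * (LINT x:region \<psi>1 \<psi>2 C D|lborel. grad_norm (v' x))"
proof -
  define S where "S = (SUP \<theta>\<in>{C..D}. \<bar>(sqrt (1 + (max \<bar>\<psi>1' \<theta>\<bar> \<bar>\<psi>2' \<theta>\<bar>)\<^sup>2) + 2 * max \<bar>\<psi>1' \<theta>\<bar> \<bar>\<psi>2' \<theta>\<bar>) / (\<psi>2 \<theta> - \<psi>1 \<theta>)\<bar>)"
  define Mi where "Mi = (SUP \<theta>\<in>{C..D}. \<bar>max \<bar>\<psi>1' \<theta>\<bar> \<bar>\<psi>2' \<theta>\<bar>\<bar>)"
  define K1 where "K1 = 2 * (1 / (D - C) + S)"
  define K2 where "K2 = sqrt 2 * (sqrt (1 + Mi\<^sup>2) + Mi)"
  define F where "F = (\<lambda>x. K1 * \<bar>v x\<bar> + K2 * grad_norm (v' x))"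
  define a where "a = region \<psi>1 \<psi>2 C D"
  have CC: "C \<in> {C..D}" and DD: "D \<in> {C..D}" using CD by auto
  have cF: "continuous_on UNIV F" unfolding F_def by (intro continuous_intros cv0 cgrad)
  have cS: "continuous_on {C..D} (\<lambda>\<theta>. \<bar>(sqrt (1 + (max \<bar>\<psi>1' \<theta>\<bar> \<bar>\<psi>2' \<theta>\<bar>)\<^sup>2) + 2 * max \<bar>\<psi>1' \<theta>\<bar> \<bar>\<psi>2' \<theta>\<bar>) / (\<psi>2 \<theta> - \<psi>1 \<theta>)\<bar>)"
    using lt by (intro continuous_intros c1 c2 cpsi1 cpsi2) force
  have cM: "continuous_on {C..D} (\<lambda>\<theta>. \<bar>max \<bar>\<psi>1' \<theta>\<bar> \<bar>\<psi>2' \<theta>\<bar>\<bar>)"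
    by (intro continuous_intros c1 c2)
  have Sb: "(sqrt (1 + (max \<bar>\<psi>1' \<theta>\<bar> \<bar>\<psi>2' \<theta>\<bar>)^2) + 2 * max \<bar>\<psi>1' \<theta>\<bar> \<bar>\<psi>2' \<theta>\<bar>) / (\<psi>2 \<theta> - \<psi>1 \<theta>) \<le> S"
    if "\<theta> \<in> {C..D}" for \<theta>
  proof -
    have "bdd_above ((\<lambda>\<theta>. \<bar>(sqrt (1 + (max \<bar>\<psi>1' \<theta>\<bar> \<bar>\<psi>2' \<theta>\<bar>)\<^sup>2) + 2 * max \<bar>\<psi>1' \<theta>\<bar> \<bar>\<psi>2' \<theta>\<bar>) / (\<psi>2 \<theta> - \<psi>1 \<theta>)\<bar>) ` {C..D})"
      by (intro bounded_imp_bdd_above compact_imp_bounded compact_continuous_image cS compact_Icc)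
    then show ?thesis unfolding S_def using cSUP_upper[OF that] abs_ge_self order_trans by blast
  qed
  have Mb: "max \<bar>\<psi>1' \<theta>\<bar> \<bar>\<psi>2' \<theta>\<bar> \<le> Mi" if "\<theta> \<in> {C..D}" for \<theta>
  proof -
    have "bdd_above ((\<lambda>\<theta>. \<bar>max \<bar>\<psi>1' \<theta>\<bar> \<bar>\<psi>2' \<theta>\<bar>\<bar>) ` {C..D})"
      by (intro bounded_imp_bdd_above compact_imp_bounded compact_continuous_image cM compact_Icc)
    then show ?thesis unfolding Mi_def using cSUP_upper[OF that] abs_ge_self order_trans by blast
  qed
  define TB where "TB = (\<lambda>\<theta>. \<bar>v (\<psi>1 \<theta>, \<theta>)\<bar> * sqrt ((\<psi>1' \<theta>)^2 + 1) + \<bar>v (\<psi>2 \<theta>, \<theta>)\<bar> * sqrt ((\<psi>2' \<theta>)^2 + 1))"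
  have cTB: "continuous_on {C..D} TB" unfolding TB_def
    by (intro continuous_intros cvpsi cpsi1 cpsi2 c1 c2)
  have cRi: "continuous_on {C..D} (\<lambda>\<theta>. integral {0..1} (\<lambda>t. R t \<theta>))"
  proof -
    have "continuous_on {C..D} (\<lambda>\<theta>. integral (cbox 0 1) (\<lambda>t. R t \<theta>))"
      by (rule integral_continuous_on_param)
        (use swapc[OF contR] in \<open>simp only: case_prod_beta' cbox_interval[of "0::real" 1]\<close>)
    then show ?thesis by (simp add: cbox_interval)
  qed
  have cFi: "continuous_on {C..D} (\<lambda>\<theta>. (\<psi>2 \<theta> - \<psi>1 \<theta>) * integral {0..1} (\<lambda>t. F (P t \<theta>)))"
  proof -
    have "continuous_on {C..D} (\<lambda>\<theta>. integral (cbox 0 1) (\<lambda>t. F (P t \<theta>)))"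
      by (rule integral_continuous_on_param)
        (use swapc[OF contP[OF cF]] in \<open>simp only: case_prod_beta' cbox_interval[of "0::real" 1]\<close>)
    then show ?thesis by (intro continuous_intros cpsi1 cpsi2) (simp add: cbox_interval)
  qed
  have "boundary_integral \<psi>1 \<psi>2 C D (\<lambda>x. \<bar>v x\<bar>)
      = (integral {C..D} (\<lambda>\<theta>. \<bar>v (\<psi>1 \<theta>, \<theta>)\<bar> * sqrt ((\<psi>1' \<theta>)^2 + 1))
         + integral {C..D} (\<lambda>\<theta>. \<bar>v (\<psi>2 \<theta>, \<theta>)\<bar> * sqrt ((\<psi>2' \<theta>)^2 + 1)))
        + (integral {\<psi>1 C..\<psi>2 C} (\<lambda>y. \<bar>v (y,C)\<bar>) + integral {\<psi>1 D..\<psi>2 D} (\<lambda>y. \<bar>v (y,D)\<bar>))"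
    unfolding boundary_integral_def arc_seg[OF lt[OF CC]] arc_seg[OF lt[OF DD]]
    using arc_graph[OF CD d1, of "\<lambda>x. \<bar>v x\<bar>"] arc_graph[OF CD d2, of "\<lambda>x. \<bar>v x\<bar>"]
    by simp
  also have "\<dots> = integral {C..D} TB
        + (integral {\<psi>1 C..\<psi>2 C} (\<lambda>y. \<bar>v (y,C)\<bar>) + integral {\<psi>1 D..\<psi>2 D} (\<lambda>y. \<bar>v (y,D)\<bar>))"
    unfolding TB_def
    by (subst integral_add) (auto intro!: integrable_continuous_interval continuous_intros cvpsi cpsi1 cpsi2 c1 c2)
  also have "\<dots> \<le> integral {C..D} TB + integral {C..D} (\<lambda>\<theta>. integral {0..1} (\<lambda>t. R t \<theta>))"
    using Vert by simp
  also have "\<dots> = integral {C..D} (\<lambda>\<theta>. TB \<theta> + integral {0..1} (\<lambda>t. R t \<theta>))"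
    by (rule integral_add[symmetric]) (intro integrable_continuous_interval cTB cRi)+
  also have "\<dots> \<le> integral {C..D} (\<lambda>\<theta>. (\<psi>2 \<theta> - \<psi>1 \<theta>) * integral {0..1} (\<lambda>t. F (P t \<theta>)))"
  proof (rule integral_le)
    show "(\<lambda>\<theta>. TB \<theta> + integral {0..1} (\<lambda>t. R t \<theta>)) integrable_on {C..D}"
      by (intro integrable_continuous_interval continuous_intros cTB cRi)
    show "(\<lambda>\<theta>. (\<psi>2 \<theta> - \<psi>1 \<theta>) * integral {0..1} (\<lambda>t. F (P t \<theta>))) integrable_on {C..D}"
      by (intro integrable_continuous_interval cFi)
    fix \<theta> assume \<theta>: "\<theta> \<in> {C..D}"
    define A where "A = sqrt (1 + (max \<bar>\<psi>1' \<theta>\<bar> \<bar>\<psi>2' \<theta>\<bar>)^2)"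
    have cR1: "continuous_on {0..1} (\<lambda>t. R t \<theta>)"
    proof -
      have "continuous_on {0..1} (\<lambda>t::real. (t, \<theta>))" by (intro continuous_intros)
      moreover have "(\<lambda>t::real. (t, \<theta>)) ` {0..1} \<subseteq> {0..1} \<times> {C..D}" using \<theta> by auto
      ultimately show ?thesis
        using continuous_on_compose2[OF contR, of "{0..1}" "\<lambda>t. (t, \<theta>)"] by simp
    qed
    have cG: "continuous_on {0..1} (\<lambda>t. 2 * A * \<bar>v (P t \<theta>)\<bar> + A * \<bar>(\<psi>2 \<theta> - \<psi>1 \<theta>) * blinfun_apply (v' (P t \<theta>)) (1,0)\<bar>)"
      by (intro continuous_intros contP_t[OF cv0 \<theta>] contP_t[OF cVy \<theta>])
    have "TB \<theta> + integral {0..1} (\<lambda>t. R t \<theta>)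
        \<le> integral {0..1} (\<lambda>t. 2 * A * \<bar>v (P t \<theta>)\<bar> + A * \<bar>(\<psi>2 \<theta> - \<psi>1 \<theta>) * blinfun_apply (v' (P t \<theta>)) (1,0)\<bar>)
          + integral {0..1} (\<lambda>t. R t \<theta>)"
      using TB_bound[OF \<theta>] unfolding TB_def A_def by simp
    also have "\<dots> = integral {0..1} (\<lambda>t. 2 * A * \<bar>v (P t \<theta>)\<bar> + A * \<bar>(\<psi>2 \<theta> - \<psi>1 \<theta>) * blinfun_apply (v' (P t \<theta>)) (1,0)\<bar> + R t \<theta>)"
      by (rule integral_add[symmetric]) (intro integrable_continuous_interval cG cR1)+
    also have "\<dots> \<le> integral {0..1} (\<lambda>t. (\<psi>2 \<theta> - \<psi>1 \<theta>) * F (P t \<theta>))"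
    proof (rule integral_le)
      show "(\<lambda>t. 2 * A * \<bar>v (P t \<theta>)\<bar> + A * \<bar>(\<psi>2 \<theta> - \<psi>1 \<theta>) * blinfun_apply (v' (P t \<theta>)) (1,0)\<bar> + R t \<theta>) integrable_on {0..1}"
        by (intro integrable_continuous_interval continuous_intros cG cR1)
      show "(\<lambda>t. (\<psi>2 \<theta> - \<psi>1 \<theta>) * F (P t \<theta>)) integrable_on {0..1}"
        by (intro integrable_continuous_interval continuous_intros contP_t[OF cF \<theta>])
      show "2 * A * \<bar>v (P t \<theta>)\<bar> + A * \<bar>(\<psi>2 \<theta> - \<psi>1 \<theta>) * blinfun_apply (v' (P t \<theta>)) (1,0)\<bar> + R t \<theta>
          \<le> (\<psi>2 \<theta> - \<psi>1 \<theta>) * F (P t \<theta>)" if t: "t \<in> {0..1}" for t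
        using PW[OF t \<theta> Sb[OF \<theta>] Mb[OF \<theta>]] unfolding A_def F_def K1_def K2_def by simp
    qed
    also have "\<dots> = (\<psi>2 \<theta> - \<psi>1 \<theta>) * integral {0..1} (\<lambda>t. F (P t \<theta>))" by simp
    finally show "TB \<theta> + integral {0..1} (\<lambda>t. R t \<theta>) \<le> (\<psi>2 \<theta> - \<psi>1 \<theta>) * integral {0..1} (\<lambda>t. F (P t \<theta>))" .
  qed
  also have "\<dots> = integral {C..D} (\<lambda>\<theta>. integral {\<psi>1 \<theta>..\<psi>2 \<theta>} (\<lambda>y. F (y, \<theta>)))"
  proof (rule integral_cong)
    fix \<theta> assume \<theta>: "\<theta> \<in> {C..D}"
    have "continuous_on {\<psi>1 \<theta>..\<psi>2 \<theta>} (\<lambda>y. F (y, \<theta>))"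
      by (rule continuous_on_compose2[OF cF, of _ "\<lambda>y. (y, \<theta>)"]) (auto intro!: continuous_intros)
    from subst01[OF _ this] lt[OF \<theta>]
    show "(\<psi>2 \<theta> - \<psi>1 \<theta>) * integral {0..1} (\<lambda>t. F (P t \<theta>)) = integral {\<psi>1 \<theta>..\<psi>2 \<theta>} (\<lambda>y. F (y, \<theta>))"
      by (simp add: P_def)
  qed
  also have "\<dots> = (LINT x:a|lborel. F x)"
    unfolding a_def using lt by (intro lint_iter[symmetric] cpsi1 cpsi2 cF) (auto intro: less_imp_le)
  also have "\<dots> = K1 * (LINT x:a|lborel. \<bar>v x\<bar>) + K2 * (LINT x:a|lborel. grad_norm (v' x))"
  proof -
    have ca: "compact a" unfolding a_def using lt by (intro region_compact cpsi1 cpsi2) (auto intro: less_imp_le)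
    have i1: "set_integrable lborel a (\<lambda>x. K1 * \<bar>v x\<bar>)" unfolding set_integrable_def
      by (intro borel_integrable_compact ca) (auto intro!: continuous_intros continuous_on_subset[OF cv0])
    have i2: "set_integrable lborel a (\<lambda>x. K2 * grad_norm (v' x))" unfolding set_integrable_def
      by (intro borel_integrable_compact ca) (auto intro!: continuous_intros continuous_on_subset[OF cgrad])
    show ?thesis unfolding F_def using set_integral_add(2)[OF i1 i2] by simp
  qed
  finally show ?thesis unfolding K1_def K2_def S_def Mi_def a_def .
qed

end

theorem theoremB1:
  fixes C D :: real
    and \<psi>1 \<psi>2 \<psi>1' \<psi>2' :: "real \<Rightarrow> real"
    and v :: "real \<times> real \<Rightarrow> real"
    and v' :: "real \<times> real \<Rightarrow> ((real \<times> real) \<Rightarrow>\<^sub>L real)"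
  assumes CD: "C < D"
    and d1: "\<And>\<theta>. \<theta> \<in> {C..D} \<Longrightarrow> (\<psi>1 has_real_derivative \<psi>1' \<theta>) (at \<theta> within {C..D})"
    and c1: "continuous_on {C..D} \<psi>1'"
    and d2: "\<And>\<theta>. \<theta> \<in> {C..D} \<Longrightarrow> (\<psi>2 has_real_derivative \<psi>2' \<theta>) (at \<theta> within {C..D})"
    and c2: "continuous_on {C..D} \<psi>2'"
    and lt: "\<And>\<theta>. \<theta> \<in> {C..D} \<Longrightarrow> \<psi>1 \<theta> < \<psi>2 \<theta>"
    and dv: "\<And>x. (v has_derivative blinfun_apply (v' x)) (at x)"
    and cv: "continuous_on UNIV v'"
  defines "M \<equiv> (\<lambda>\<theta>. max \<bar>\<psi>1' \<theta>\<bar> \<bar>\<psi>2' \<theta>\<bar>)"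
    and "a \<equiv> region \<psi>1 \<psi>2 C D"
  shows "boundary_integral \<psi>1 \<psi>2 C D (\<lambda>x. \<bar>v x\<bar>)
     \<le> 2 * (1 / (D - C)
            + (SUP \<theta>\<in>{C..D}. \<bar>(sqrt (1 + (M \<theta>)\<^sup>2) + 2 * M \<theta>) / (\<psi>2 \<theta> - \<psi>1 \<theta>)\<bar>))
          * (LINT x:a|lborel. \<bar>v x\<bar>)
       + sqrt 2 * (sqrt (1 + (SUP \<theta>\<in>{C..D}. \<bar>M \<theta>\<bar>)\<^sup>2) + (SUP \<theta>\<in>{C..D}. \<bar>M \<theta>\<bar>))
          * (LINT x:a|lborel. grad_norm (v' x))"
proof -
  interpret bsetup C D \<psi>1 \<psi>2 \<psi>1' \<psi>2' v v'
    by (rule bsetup.intro[OF CD d1 c1 d2 c2 lt dv cv])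
  show ?thesis unfolding M_def a_def by (rule main)
qed

end
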